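(* Let $\{w^k\}$ be generated by the L-GADMM iteration. Then for every $k\ge0$, $$\|w^{k+1}-w^{k+2}\|_H^2\le\|w^k-w^{k+1}\|_H^2.$$
   Context: Standing setting. Let $m\ge 2$, $\ell$, $n_1,\dots,n_m$ be positive integers. For $i=1,\dots,m$ let $\theta_i:\mathbb{R}^{n_i}\to\mathbb{R}$ be convex, $\mathcal{X}_i\subseteq\mathbb{R}^{n_i}$ nonempty closed convex, $A_i\in\mathbb{R}^{\ell\times n_i}$ of full column rank, and $b\in\mathbb{R}^\ell$. Problem (P): $\min\{\sum_{i=1}^m\theta_i(x_i):\sum_{i=1}^mA_ix_i=b,\ x_i\in\mathcal{X}_i\}$, assumed to have a nonempty solution set. Write $u=(x_1,\dots,x_m)$, $w=(x_1,\dots,x_m,y)$ with $y\in\mathbb{R}^\ell$, $\theta(u)=\sum_i\theta_i(x_i)$, $F(w)=(-A_1^\top y,\dots,-A_m^\top y,\ \sum_iA_ix_i-b)$, $\mathcal{W}=\mathcal{X}_1\times\cdots\times\mathcal{X}_m\times\mathbb{R}^\ell$, and $\mathcal{W}^*=\{w^*\in\mathcal{W}:\theta(u)-\theta(u^* )+(w-w^* )^\top F(w^* )\ge0\ \forall w\in\mathcal{W}\}$ (nonempty). For symmetric $G$, $\|v\|_G^2:=v^\top Gv$; $\|\cdot\|$ is the Euclidean norm. Vectors are partitioned as $w=(R,x_m,y)$ with $R=(x_1,\dots,x_{m-1})$. Parameters: $\rho>0$, $\gamma\in(0,2)$, symmetric positive definite $P_i\in\mathbb{R}^{n_i\times n_i}$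 ($i=1,\dots,m$) such that $G_1\succ0$, where $G_1$ is the symmetric block matrix with diagonal blocks $P_1,\dots,P_{m-1}$ and $(i,j)$ block $-\rho A_i^\top A_j$ for $i\ne j$, $1\le i,j\le m-1$. Matrices (w.r.t. the partition $(R,x_m,y)$): $Q=\begin{pmatrix}G_1&0&0\\0&\rho A_m^\top A_m+P_m&(1-\gamma)A_m^\top\\0&-A_m&\frac1\rho I_\ell\end{pmatrix}$, $M=\begin{pmatrix}I&0&0\\0&I_{n_m}&0\\0&-\rho A_m&\gamma I_\ell\end{pmatrix}$, $H=\begin{pmatrix}G_1&0&0\\0&P_m+\frac\rho\gamma A_m^\top A_m&\frac{1-\gamma}\gamma A_m^\top\\0&\frac{1-\gamma}\gamma A_m&\frac1{\gamma\rho}I_\ell\end{pmatrix}$, $N=Q^\top+Q-M^\top HM$. L-GADMM iteration: from an arbitrary $w^0=(x_1^0,\dots,x_m^0,y^0)\in\mathcal{W}$, for $k=0,1,2,\dots$: $x_j^{k+1}=\arg\min_{x_j\in\mathcal{X}_j}\{\theta_j(x_j)+\frac\rho2\|A_jx_j+\sum_{i=1,i\ne j}^mA_ix_i^k-b-\frac{y^k}\rho\|^2+\frac12\|x_j-x_j^k\|_{P_j}^2\}$ for $j=1,\dots,m-1$; $x_m^{k+1}=\arg\min_{x_m\in\mathcal{X}_m}\{\theta_m(x_m)+\frac\rho2\|\gamma\sum_{i=1}^{m-1}A_ix_i^{k+1}+(1-\gamma)(b-A_mx_m^k)+A_mx_m-b-\frac{y^k}\rho\|^2+\frac12\|x_m-x_m^k\|_{P_m}^2\}$;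 $y^{k+1}=y^k-\rho\big(\gamma\sum_{i=1}^{m-1}A_ix_i^{k+1}+(1-\gamma)(b-A_mx_m^k)+A_mx_m^{k+1}-b\big)$. Auxiliary sequence: $\bar w^k=(\bar x_1^k,\dots,\bar x_m^k,\bar y^k)$ with $\bar x_i^k=x_i^{k+1}$ ($i=1,\dots,m$) and $\bar y^k=y^k-\rho(\sum_{i=1}^{m-1}A_ix_i^{k+1}+A_mx_m^k-b)$; $\bar u^k=(\bar x_1^k,\dots,\bar x_m^k)$, $R^k=(x_1^k,\dots,x_{m-1}^k)$, $\bar R^k=(\bar x_1^k,\dots,\bar x_{m-1}^k)$. *)

theory Defs
  imports "Jordan_Normal_Form.Matrix"
begin

(* Vectors of R^d are rendered as JNF vectors v :: real vec with v : carrier_vec d;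
   matrices of R^{p x q} as M :: real mat with M : carrier_mat p q.
   Blocks are indexed 1..m. *)

definition vsum :: "nat \<Rightarrow> (nat \<Rightarrow> real vec) \<Rightarrow> nat set \<Rightarrow> real vec" where
  "vsum d f I = vec d (\<lambda>r. \<Sum>i\<in>I. f i $ r)"

definition sqn :: "real vec \<Rightarrow> real" where
  "sqn v = v \<bullet> v"

definition wnorm2 :: "real mat \<Rightarrow> real vec \<Rightarrow> real" where
  "wnorm2 P v = v \<bullet> (P *\<^sub>v v)"

definition convex_vec_set :: "nat \<Rightarrow> real vec set \<Rightarrow> bool" where
  "convex_vec_set d X \<longleftrightarrow> X \<subseteq> carrier_vec d \<and>
     (\<forall>x\<in>X. \<forall>y\<in>X. \<forall>t::real. 0 \<le> t \<and> t \<le> 1 \<longrightarrow> t \<cdot>\<^sub>v x + (1 - t) \<cdot>\<^sub>v y \<in> X)"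

definition closed_vec_set :: "nat \<Rightarrow> real vec set \<Rightarrow> bool" where
  "closed_vec_set d X \<longleftrightarrow> X \<subseteq> carrier_vec d \<and>
     (\<forall>f v. (\<forall>k. f k \<in> X) \<longrightarrow> v \<in> carrier_vec d \<longrightarrow>
        (\<lambda>k. sqrt (sqn (f k - v))) \<longlonglongrightarrow> 0 \<longrightarrow> v \<in> X)"

definition convex_vec_fun :: "nat \<Rightarrow> (real vec \<Rightarrow> real) \<Rightarrow> bool" where
  "convex_vec_fun d f \<longleftrightarrow>
     (\<forall>x\<in>carrier_vec d. \<forall>y\<in>carrier_vec d. \<forall>t::real. 0 \<le> t \<and> t \<le> 1 \<longrightarrow>
        f (t \<cdot>\<^sub>v x + (1 - t) \<cdot>\<^sub>v y) \<le> t * f x + (1 - t) * f y)"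

definition sym_pd :: "nat \<Rightarrow> real mat \<Rightarrow> bool" where
  "sym_pd d P \<longleftrightarrow> P \<in> carrier_mat d d \<and> transpose_mat P = P \<and>
     (\<forall>v\<in>carrier_vec d. v \<noteq> 0\<^sub>v d \<longrightarrow> v \<bullet> (P *\<^sub>v v) > 0)"

definition full_col_rank :: "nat \<Rightarrow> nat \<Rightarrow> real mat \<Rightarrow> bool" where
  "full_col_rank p q A \<longleftrightarrow> A \<in> carrier_mat p q \<and>
     (\<forall>v\<in>carrier_vec q. A *\<^sub>v v = 0\<^sub>v p \<longrightarrow> v = 0\<^sub>v q)"

definition G1_qf :: "nat \<Rightarrow> real \<Rightarrow> (nat \<Rightarrow> real mat) \<Rightarrow> (nat \<Rightarrow> real mat) \<Rightarrow> (nat \<Rightarrow> real vec) \<Rightarrow> real" where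
  "G1_qf m \<rho> A P d =
     (\<Sum>i\<in>{1..m-1}. wnorm2 (P i) (d i))
     - \<rho> * (\<Sum>i\<in>{1..m-1}. \<Sum>j\<in>{1..m-1} - {i}. (A i *\<^sub>v d i) \<bullet> (A j *\<^sub>v d j))"

(* ||w||_H^2 for w = (R, x_m, y) = (d_1,...,d_m, e), with H as in the paper, written out blockwise:
   ||R||_{G1}^2 + x_m^T (P_m + rho/gamma A_m^T A_m) x_m + 2 (1-gamma)/gamma (A_m x_m)^T y
   + 1/(gamma rho) ||y||^2 *)
definition H_qf :: "nat \<Rightarrow> real \<Rightarrow> real \<Rightarrow> (nat \<Rightarrow> real mat) \<Rightarrow> (nat \<Rightarrow> real mat)
                      \<Rightarrow> (nat \<Rightarrow> real vec) \<Rightarrow> real vec \<Rightarrow> real" where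
  "H_qf m \<rho> \<gamma> A P d e =
     G1_qf m \<rho> A P d
     + wnorm2 (P m) (d m) + (\<rho> / \<gamma>) * sqn (A m *\<^sub>v d m)
     + 2 * ((1 - \<gamma>) / \<gamma>) * ((A m *\<^sub>v d m) \<bullet> e)
     + (1 / (\<gamma> * \<rho>)) * sqn e"

end

theory Submission imports Defs begin

lemma sym_dot:
  fixes P :: "real mat"
  assumes P: "P \<in> carrier_mat n n" "transpose_mat P = P" and q: "q \<in> carrier_vec n" and h: "h \<in> carrier_vec n"
  shows "q \<bullet> (P *\<^sub>v h) = h \<bullet> (P *\<^sub>v q)"
proof -
  have "q \<bullet> (P *\<^sub>v h) = (transpose_mat P *\<^sub>v q) \<bullet> h"
    using transpose_vec_mult_scalar[OF P(1) h q] by simp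
  also have "\<dots> = h \<bullet> (P *\<^sub>v q)" using P q h by (simp add: comm_scalar_prod[of _ n])
  finally show ?thesis .
qed

lemma sqn_add_smult:
  assumes u: "u \<in> carrier_vec l" and v: "v \<in> carrier_vec l"
  shows "sqn (u + t \<cdot>\<^sub>v v) = sqn u + 2*t*(v \<bullet> u) + t^2 * sqn v"
  using u v unfolding sqn_def
  by (simp add: add_scalar_prod_distrib[of _ l] scalar_prod_add_distrib[of _ l] comm_scalar_prod[of u l v] power2_eq_square algebra_simps)

lemma wnorm2_add_smult:
  assumes P: "P \<in> carrier_mat n n" "transpose_mat P = P" and q: "q \<in> carrier_vec n" and h: "h \<in> carrier_vec n"
  shows "wnorm2 P (q + t \<cdot>\<^sub>v h) = wnorm2 P q + 2*t*(h \<bullet> (P *\<^sub>v q)) + t^2 * wnorm2 P h"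
proof -
  have e: "P *\<^sub>v (q + t \<cdot>\<^sub>v h) = P *\<^sub>v q + t \<cdot>\<^sub>v (P *\<^sub>v h)"
    using P q h by (simp add: mult_add_distrib_mat_vec[of _ n n] mult_mat_vec[of _ n n])
  show ?thesis unfolding wnorm2_def e using P q h sym_dot[OF P q h]
    by (simp add: add_scalar_prod_distrib[of _ n] scalar_prod_add_distrib[of _ n] power2_eq_square algebra_simps)
qed

lemma small_pos:
  fixes a B :: real
  assumes "\<forall>t. 0 < t \<and> t \<le> 1 \<longrightarrow> 0 \<le> t*a + t^2*B"
  shows "0 \<le> a"
proof (rule ccontr)
  assume "\<not> 0 \<le> a" hence a: "a < 0" by simp
  define t where "t = min 1 (-a / (2*(\<bar>B\<bar>+1)))"
  have "0 < 2*(\<bar>B\<bar>+1)" by simp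
  hence t0: "0 < t" using a unfolding t_def using divide_pos_pos[of "-a" "2*(\<bar>B\<bar>+1)"] by simp
  have t1: "t \<le> 1" by (simp add: t_def)
  have tb: "t * (2*(\<bar>B\<bar>+1)) \<le> -a"
  proof -
    have "t \<le> -a / (2*(\<bar>B\<bar>+1))" by (simp add: t_def)
    thus ?thesis by (simp add: pos_le_divide_eq[symmetric] add_pos_nonneg)
  qed
  have "t*B \<le> t*\<bar>B\<bar>" using t0 by (simp add: mult_left_mono)
  moreover have "t*\<bar>B\<bar> < t * (2*(\<bar>B\<bar>+1))" using t0 by simp
  ultimately have "a + t*B < 0" using tb by linarith
  hence "a + t*B < 0" by simp
  hence "t*(a + t*B) < 0" using t0 by (simp add: mult_pos_neg)
  moreover have "0 \<le> t*a + t^2*B" using assms t0 t1 by blast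
  ultimately show False by (simp add: power2_eq_square algebra_simps)
qed

lemma fo:
  fixes \<theta> :: "real vec \<Rightarrow> real" and A P :: "real mat"
  assumes cf: "convex_vec_fun n \<theta>" and cX: "convex_vec_set n X"
    and A: "A \<in> carrier_mat l n" and P: "P \<in> carrier_mat n n" "transpose_mat P = P"
    and w: "w \<in> carrier_vec l" and x0: "x0 \<in> carrier_vec n"
    and am: "is_arg_min (\<lambda>z. \<theta> z + c * sqn (A *\<^sub>v z + w) + 1/2 * wnorm2 P (z - x0)) (\<lambda>z. z \<in> X) xs"
    and z: "z \<in> X"
  shows "0 \<le> \<theta> z - \<theta> xs + 2*c*((A *\<^sub>v (z - xs)) \<bullet> (A *\<^sub>v xs + w)) + (z - xs) \<bullet> (P *\<^sub>v (xs - x0))"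
proof -
  have cvX: "\<forall>x\<in>X. \<forall>y\<in>X. \<forall>t::real. 0 \<le> t \<and> t \<le> 1 \<longrightarrow> t \<cdot>\<^sub>v x + (1 - t) \<cdot>\<^sub>v y \<in> X"
    using cX unfolding convex_vec_set_def by (elim conjE)
  have cvf: "\<forall>x\<in>carrier_vec n. \<forall>y\<in>carrier_vec n. \<forall>t::real. 0 \<le> t \<and> t \<le> 1 \<longrightarrow>
        \<theta> (t \<cdot>\<^sub>v x + (1 - t) \<cdot>\<^sub>v y) \<le> t * \<theta> x + (1 - t) * \<theta> y"
    using cf unfolding convex_vec_fun_def .
  have xsX: "xs \<in> X" using am unfolding is_arg_min_def by (elim conjE)
  have Xc: "X \<subseteq> carrier_vec n" using cX unfolding convex_vec_set_def by (elim conjE)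
  have xs: "xs \<in> carrier_vec n" using xsX Xc by auto
  have zc: "z \<in> carrier_vec n" using z Xc by auto
  define h where "h = z - xs"
  have h: "h \<in> carrier_vec n" using xs zc by (simp add: h_def)
  define u where "u = A *\<^sub>v xs + w"
  have u: "u \<in> carrier_vec l" using A xs w by (simp add: u_def)
  have Ah: "A *\<^sub>v h \<in> carrier_vec l" using A h by simp
  define q where "q = xs - x0"
  have q: "q \<in> carrier_vec n" using xs x0 by (simp add: q_def)
  define a where "a = \<theta> z - \<theta> xs + 2*c*((A *\<^sub>v h) \<bullet> u) + h \<bullet> (P *\<^sub>v q)"
  define B where "B = c * sqn (A *\<^sub>v h) + 1/2 * wnorm2 P h"
  have "\<forall>t. 0 < t \<and> t \<le> 1 \<longrightarrow> 0 \<le> t*a + t^2*B"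
  proof (intro allI impI)
    fix t :: real assume t: "0 < t \<and> t \<le> 1"
    define zt where "zt = t \<cdot>\<^sub>v z + (1 - t) \<cdot>\<^sub>v xs"
    have t01: "0 \<le> t \<and> t \<le> 1" using t by simp
    have ztX: "zt \<in> X" unfolding zt_def using cvX[rule_format, OF z xsX t01] .
    have zt: "zt = xs + t \<cdot>\<^sub>v h"
      unfolding zt_def h_def using xs zc by (intro eq_vecI) (auto simp: algebra_simps)
    have e1a: "A *\<^sub>v zt = A *\<^sub>v xs + t \<cdot>\<^sub>v (A *\<^sub>v h)"
      unfolding zt using A xs h by (simp add: mult_add_distrib_mat_vec[of _ l n] mult_mat_vec[of _ l n])
    have e1: "A *\<^sub>v zt + w = u + t \<cdot>\<^sub>v (A *\<^sub>v h)"
      unfolding e1a u_def using A xs h w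
      by (intro eq_vecI) auto
    have e2: "zt - x0 = q + t \<cdot>\<^sub>v h"
      unfolding zt q_def using xs h x0 by (intro eq_vecI) (auto simp: algebra_simps)
    have cv: "\<theta> zt \<le> t * \<theta> z + (1 - t) * \<theta> xs"
      unfolding zt_def using cvf[rule_format, OF zc xs t01] .
    have "\<not> (\<theta> zt + c * sqn (A *\<^sub>v zt + w) + 1/2 * wnorm2 P (zt - x0)
             < \<theta> xs + c * sqn (A *\<^sub>v xs + w) + 1/2 * wnorm2 P (xs - x0))"
      using am ztX unfolding is_arg_min_def by (simp add: not_less)
    hence "\<theta> xs + c * sqn u + 1/2 * wnorm2 P q \<le>
           \<theta> zt + c * (sqn u + 2*t*((A *\<^sub>v h) \<bullet> u) + t^2 * sqn (A *\<^sub>v h))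
            + 1/2 * (wnorm2 P q + 2*t*(h \<bullet> (P *\<^sub>v q)) + t^2 * wnorm2 P h)"
      unfolding e1 e2 sqn_add_smult[OF u Ah] wnorm2_add_smult[OF P q h] u_def[symmetric] q_def[symmetric]
      by simp
    thus "0 \<le> t*a + t^2*B" using cv unfolding a_def B_def by (simp add: algebra_simps)
  qed
  hence "0 \<le> a" by (rule small_pos)
  thus ?thesis unfolding a_def h_def u_def q_def .
qed

lemma vsum_index[simp]: "r < d \<Longrightarrow> vsum d F I $ r = (\<Sum>i\<in>I. F i $ r)"
  unfolding vsum_def by simp

lemma dim_vsum[simp]: "dim_vec (vsum d F I) = d"
  unfolding vsum_def by simp

lemma sum_split:
  fixes F :: "nat \<Rightarrow> real"
  assumes j: "j \<in> {1..m-1}" and m: "m \<ge> 2"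
  shows "(\<Sum>i\<in>{1..m}-{j}. F i) = (\<Sum>i\<in>{1..m-1}. F i) + F m - F j"
proof -
  have "{1..m} = insert m {1..m-1}" using m by auto
  hence "(\<Sum>i\<in>{1..m}. F i) = F m + (\<Sum>i\<in>{1..m-1}. F i)" using m by simp
  moreover have "(\<Sum>i\<in>{1..m}. F i) = F j + (\<Sum>i\<in>{1..m}-{j}. F i)"
    using j by (subst sum.remove[of _ j]) auto
  ultimately show ?thesis by linarith
qed

lemma vsum_carrier[simp]: "vsum d F I \<in> carrier_vec d"
  unfolding vsum_def by simp

lemma vsum_dot:
  assumes I: "finite I" and F: "\<And>i. i \<in> I \<Longrightarrow> F i \<in> carrier_vec d" and v: "v \<in> carrier_vec d"
  shows "vsum d F I \<bullet> v = (\<Sum>i\<in>I. F i \<bullet> v)"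
proof -
  have "vsum d F I \<bullet> v = (\<Sum>r\<in>{0..<d}. (\<Sum>i\<in>I. F i $ r) * v $ r)"
    using v unfolding scalar_prod_def by simp
  also have "\<dots> = (\<Sum>r\<in>{0..<d}. \<Sum>i\<in>I. F i $ r * v $ r)" by (simp add: sum_distrib_right)
  also have "\<dots> = (\<Sum>i\<in>I. \<Sum>r\<in>{0..<d}. F i $ r * v $ r)" by (rule sum.swap)
  also have "\<dots> = (\<Sum>i\<in>I. F i \<bullet> v)"
    using v by (intro sum.cong) (auto simp: scalar_prod_def)
  finally show ?thesis .
qed

lemma double_sum:
  fixes F :: "nat \<Rightarrow> real vec"
  assumes I: "finite I" and F: "\<And>i. i \<in> I \<Longrightarrow> F i \<in> carrier_vec d"
  shows "(\<Sum>i\<in>I. \<Sum>j\<in>I-{i}. F i \<bullet> F j) = vsum d F I \<bullet> vsum d F I - (\<Sum>i\<in>I. F i \<bullet> F i)"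
proof -
  have "vsum d F I \<bullet> vsum d F I = (\<Sum>i\<in>I. F i \<bullet> vsum d F I)"
    using vsum_dot[OF I F] by simp
  also have "\<dots> = (\<Sum>i\<in>I. vsum d F I \<bullet> F i)"
    using F by (intro sum.cong) (auto intro: comm_scalar_prod[of _ d])
  also have "\<dots> = (\<Sum>i\<in>I. \<Sum>j\<in>I. F j \<bullet> F i)"
    using vsum_dot[OF I F] F by (intro sum.cong) auto
  also have "\<dots> = (\<Sum>i\<in>I. \<Sum>j\<in>I. F i \<bullet> F j)"
    using F by (intro sum.cong) (auto intro: comm_scalar_prod[of _ d])
  also have "\<dots> = (\<Sum>i\<in>I. F i \<bullet> F i + (\<Sum>j\<in>I-{i}. F i \<bullet> F j))"
    using I by (intro sum.cong) (auto simp: sum.remove)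
  also have "\<dots> = (\<Sum>i\<in>I. F i \<bullet> F i) + (\<Sum>i\<in>I. \<Sum>j\<in>I-{i}. F i \<bullet> F j)"
    by (simp add: sum.distrib)
  finally show ?thesis by simp
qed

lemma is_arg_min_cong:
  assumes "is_arg_min f Q x" "\<And>z. Q z \<Longrightarrow> f z = g z"
  shows "is_arg_min g Q x"
  using assms unfolding is_arg_min_def by metis

lemma neg_sub:
  fixes p q :: "real vec"
  assumes "p \<in> carrier_vec n" "q \<in> carrier_vec n"
  shows "p - q = (-1) \<cdot>\<^sub>v (q - p)"
  using assms by (intro eq_vecI) auto

lemma pair:
  fixes \<theta> :: "real vec \<Rightarrow> real" and A P :: "real mat"
  assumes A: "A \<in> carrier_mat l n" and P: "P \<in> carrier_mat n n" "transpose_mat P = P"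
    and p: "p0 \<in> carrier_vec n" "p1 \<in> carrier_vec n" "p2 \<in> carrier_vec n"
    and U: "U0 \<in> carrier_vec l" "U1 \<in> carrier_vec l"
    and h1: "0 \<le> \<theta> p2 - \<theta> p1 + 2*(\<rho>/2)*((A *\<^sub>v (p2 - p1)) \<bullet> U0) + (p2 - p1) \<bullet> (P *\<^sub>v (p1 - p0))"
    and h2: "0 \<le> \<theta> p1 - \<theta> p2 + 2*(\<rho>/2)*((A *\<^sub>v (p1 - p2)) \<bullet> U1) + (p1 - p2) \<bullet> (P *\<^sub>v (p2 - p1))"
  shows "0 \<le> \<rho>*((A *\<^sub>v (p1 - p2)) \<bullet> (U1 - U0)) + (p1 - p2) \<bullet> (P *\<^sub>v (p0 - p1))
             - (p1 - p2) \<bullet> (P *\<^sub>v (p1 - p2))"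
proof -
  have d: "p1 - p2 \<in> carrier_vec n" "p0 - p1 \<in> carrier_vec n" using p by auto
  have n1: "p2 - p1 = (-1) \<cdot>\<^sub>v (p1 - p2)" using neg_sub p by blast
  have n2: "p1 - p0 = (-1) \<cdot>\<^sub>v (p0 - p1)" using neg_sub p by blast
  have t1: "(A *\<^sub>v (p2 - p1)) \<bullet> U0 = - ((A *\<^sub>v (p1 - p2)) \<bullet> U0)"
    unfolding n1 using A d U by (simp add: mult_mat_vec[of _ l n])
  have t2: "(p2 - p1) \<bullet> (P *\<^sub>v (p1 - p0)) = (p1 - p2) \<bullet> (P *\<^sub>v (p0 - p1))"
    unfolding n1 n2 using P d by (simp add: mult_mat_vec[of _ n n])
  have t3: "(p1 - p2) \<bullet> (P *\<^sub>v (p2 - p1)) = - ((p1 - p2) \<bullet> (P *\<^sub>v (p1 - p2)))"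
    unfolding n1 using P d by (simp add: mult_mat_vec[of _ n n])
  have t4: "(A *\<^sub>v (p1 - p2)) \<bullet> (U1 - U0) = (A *\<^sub>v (p1 - p2)) \<bullet> U1 - (A *\<^sub>v (p1 - p2)) \<bullet> U0"
    using A d U by (simp add: scalar_prod_minus_distrib[of _ l])
  show ?thesis using h1 h2 unfolding t1 t2 t3 t4 by (simp add: algebra_simps)
qed

lemma sqn_nonneg: "0 \<le> sqn (v :: real vec)"
  unfolding sqn_def scalar_prod_def by (auto intro: sum_nonneg)


lemma aux5: "0 \<le> (a::real) \<Longrightarrow> 0 \<le> b \<Longrightarrow> 0 \<le> c \<Longrightarrow> 0 \<le> d \<Longrightarrow> 0 \<le> e \<Longrightarrow> 0 \<le> 2*a + 2*b + c + d + e"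
  by simp

lemma mat_vec_zero:
  fixes A :: "real mat"
  assumes "A \<in> carrier_mat l n"
  shows "A *\<^sub>v 0\<^sub>v n = 0\<^sub>v l"
  using assms by (intro eq_vecI) (auto simp: row_def)

lemma final_alg:
  fixes \<rho> \<gamma> Df Sbb ED Dam Sba SdPe SPd bmg dPem wPdm bmf bmam bmbm Dbm gg ff amf amam DD SPe EE Saa wPem :: real
  assumes rho: "\<rho> > 0" and gam: "0 < \<gamma>" "\<gamma> < 2"
    and I1: "0 \<le> Df - \<rho>*Sbb - \<rho>*ED - \<rho>*Dam + \<rho>*Sba + SdPe - SPd"
    and I2: "0 \<le> bmg + dPem - wPdm"
    and bmg: "bmg = bmf + \<rho>*((1-\<gamma>)*bmam - bmbm - \<gamma>*Dbm)"
    and gg: "gg = ff + 2*\<rho>*((1-\<gamma>)*amf - bmf - \<gamma>*Df) + \<rho>^2*((1-\<gamma>)^2*amam + bmbm + \<gamma>^2*DD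
               - 2*(1-\<gamma>)*bmam - 2*(1-\<gamma>)*\<gamma>*Dam + 2*\<gamma>*Dbm)"
    and N1: "0 \<le> (SPe - 2*SdPe + SPd) - \<rho>*((EE - 2*ED + DD) - (Saa - 2*Sba + Sbb))"
    and N2: "0 \<le> wPem - 2*dPem + wPdm"
    and N3: "0 \<le> DD + 2*Dam + amam"
  shows "(SPd - \<rho>*(DD - Sbb)) + wPdm + \<rho>/\<gamma>*bmbm + 2*((1-\<gamma>)/\<gamma>)*bmg + 1/(\<gamma>*\<rho>)*gg
       \<le> (SPe - \<rho>*(EE - Saa)) + wPem + \<rho>/\<gamma>*amam + 2*((1-\<gamma>)/\<gamma>)*amf + 1/(\<gamma>*\<rho>)*ff"
proof -
  have g0: "\<gamma> \<noteq> 0" "\<rho> \<noteq> 0" using rho gam by auto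
  have key: "((SPe - \<rho>*(EE - Saa)) + wPem + \<rho>/\<gamma>*amam + 2*((1-\<gamma>)/\<gamma>)*amf + 1/(\<gamma>*\<rho>)*ff)
       - ((SPd - \<rho>*(DD - Sbb)) + wPdm + \<rho>/\<gamma>*bmbm + 2*((1-\<gamma>)/\<gamma>)*bmg + 1/(\<gamma>*\<rho>)*gg)
     = 2*(Df - \<rho>*Sbb - \<rho>*ED - \<rho>*Dam + \<rho>*Sba + SdPe - SPd) + 2*(bmg + dPem - wPdm)
       + ((SPe - 2*SdPe + SPd) - \<rho>*((EE - 2*ED + DD) - (Saa - 2*Sba + Sbb)))
       + (wPem - 2*dPem + wPdm) + (2-\<gamma>)*\<rho>*(DD + 2*Dam + amam)"
    unfolding bmg gg using g0 by (simp add: field_simps) (simp add: algebra_simps power2_eq_square)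
  have n3: "0 \<le> (2-\<gamma>)*\<rho>*(DD + 2*Dam + amam)" using rho gam N3 by simp
  have "0 \<le> 2*(Df - \<rho>*Sbb - \<rho>*ED - \<rho>*Dam + \<rho>*Sba + SdPe - SPd) + 2*(bmg + dPem - wPdm)
       + ((SPe - 2*SdPe + SPd) - \<rho>*((EE - 2*ED + DD) - (Saa - 2*Sba + Sbb)))
       + (wPem - 2*dPem + wPdm) + (2-\<gamma>)*\<rho>*(DD + 2*Dam + amam)"
    by (rule aux5[OF I1 I2 N1 N2 n3])
  hence "0 \<le> ((SPe - \<rho>*(EE - Saa)) + wPem + \<rho>/\<gamma>*amam + 2*((1-\<gamma>)/\<gamma>)*amf + 1/(\<gamma>*\<rho>)*ff)
       - ((SPd - \<rho>*(DD - Sbb)) + wPdm + \<rho>/\<gamma>*bmbm + 2*((1-\<gamma>)/\<gamma>)*bmg + 1/(\<gamma>*\<rho>)*gg)"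
    unfolding key .
  thus ?thesis by simp
qed

theorem theorem4p4:
  fixes m l :: nat and n :: "nat \<Rightarrow> nat"
    and \<theta> :: "nat \<Rightarrow> real vec \<Rightarrow> real"
    and X :: "nat \<Rightarrow> real vec set"
    and A P :: "nat \<Rightarrow> real mat"
    and b :: "real vec"
    and \<rho> \<gamma> :: real
    and x :: "nat \<Rightarrow> nat \<Rightarrow> real vec"
    and y :: "nat \<Rightarrow> real vec"
  assumes m2: "m \<ge> 2" and lpos: "l > 0"
    and npos: "\<forall>i\<in>{1..m}. n i > 0"
    and conv\<theta>: "\<forall>i\<in>{1..m}. convex_vec_fun (n i) (\<theta> i)"
    and Xne: "\<forall>i\<in>{1..m}. X i \<noteq> {}"
    and Xclosed: "\<forall>i\<in>{1..m}. closed_vec_set (n i) (X i)"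
    and Xconv: "\<forall>i\<in>{1..m}. convex_vec_set (n i) (X i)"
    and Arank: "\<forall>i\<in>{1..m}. full_col_rank l (n i) (A i)"
    and b: "b \<in> carrier_vec l"
    and Psol: "\<exists>u. (\<forall>i\<in>{1..m}. u i \<in> X i) \<and> vsum l (\<lambda>i. A i *\<^sub>v u i) {1..m} = b \<and>
                 (\<forall>v. (\<forall>i\<in>{1..m}. v i \<in> X i) \<and> vsum l (\<lambda>i. A i *\<^sub>v v i) {1..m} = b \<longrightarrow>
                      (\<Sum>i\<in>{1..m}. \<theta> i (u i)) \<le> (\<Sum>i\<in>{1..m}. \<theta> i (v i)))"
    and Wstar: "\<exists>xs ys. (\<forall>i\<in>{1..m}. xs i \<in> X i) \<and> ys \<in> carrier_vec l \<and>
                 (\<forall>xx yy. (\<forall>i\<in>{1..m}. xx i \<in> X i) \<and> yy \<in> carrier_vec l \<longrightarrow>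
                    (\<Sum>i\<in>{1..m}. \<theta> i (xx i)) - (\<Sum>i\<in>{1..m}. \<theta> i (xs i))
                    + (\<Sum>i\<in>{1..m}. (xx i - xs i) \<bullet> (- (transpose_mat (A i) *\<^sub>v ys)))
                    + (yy - ys) \<bullet> (vsum l (\<lambda>i. A i *\<^sub>v xs i) {1..m} - b) \<ge> 0)"
    and rho: "\<rho> > 0" and gam: "0 < \<gamma>" "\<gamma> < 2"
    and Ppd: "\<forall>i\<in>{1..m}. sym_pd (n i) (P i)"
    and G1pd: "\<forall>d. (\<forall>i\<in>{1..m-1}. d i \<in> carrier_vec (n i)) \<and>
                    (\<exists>i\<in>{1..m-1}. d i \<noteq> 0\<^sub>v (n i)) \<longrightarrow> G1_qf m \<rho> A P d > 0"
    and x0: "\<forall>i\<in>{1..m}. x 0 i \<in> X i" and y0: "y 0 \<in> carrier_vec l"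
    and xstep: "\<forall>k. \<forall>j\<in>{1..m-1}. is_arg_min
        (\<lambda>z. \<theta> j z
             + (\<rho> / 2) * sqn (A j *\<^sub>v z + vsum l (\<lambda>i. A i *\<^sub>v x k i) ({1..m} - {j}) - b
                               - (1 / \<rho>) \<cdot>\<^sub>v y k)
             + (1 / 2) * wnorm2 (P j) (z - x k j))
        (\<lambda>z. z \<in> X j) (x (Suc k) j)"
    and xmstep: "\<forall>k. is_arg_min
        (\<lambda>z. \<theta> m z
             + (\<rho> / 2) * sqn (\<gamma> \<cdot>\<^sub>v vsum l (\<lambda>i. A i *\<^sub>v x (Suc k) i) {1..m-1}
                               + (1 - \<gamma>) \<cdot>\<^sub>v (b - A m *\<^sub>v x k m)
                               + A m *\<^sub>v z - b - (1 / \<rho>) \<cdot>\<^sub>v y k)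
             + (1 / 2) * wnorm2 (P m) (z - x k m))
        (\<lambda>z. z \<in> X m) (x (Suc k) m)"
    and ystep: "\<forall>k. y (Suc k) = y k - \<rho> \<cdot>\<^sub>v
        (\<gamma> \<cdot>\<^sub>v vsum l (\<lambda>i. A i *\<^sub>v x (Suc k) i) {1..m-1}
         + (1 - \<gamma>) \<cdot>\<^sub>v (b - A m *\<^sub>v x k m) + A m *\<^sub>v x (Suc k) m - b)"
  shows "\<forall>k. H_qf m \<rho> \<gamma> A P (\<lambda>i. x (k+1) i - x (k+2) i) (y (k+1) - y (k+2))
            \<le> H_qf m \<rho> \<gamma> A P (\<lambda>i. x k i - x (k+1) i) (y k - y (k+1))"
  proof (intro allI)
  fix k :: nat
  have m1: "m - 1 \<in> {1..m-1}" "m \<in> {1..m}" "m \<notin> {1..m-1}" using m2 by auto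
  have Ac: "\<And>i. i \<in> {1..m} \<Longrightarrow> A i \<in> carrier_mat l (n i)"
    using Arank by (auto simp: full_col_rank_def)
  have Pc: "\<And>i. i \<in> {1..m} \<Longrightarrow> P i \<in> carrier_mat (n i) (n i)"
    and PT: "\<And>i. i \<in> {1..m} \<Longrightarrow> transpose_mat (P i) = P i"
    using Ppd by (auto simp: sym_pd_def)
  have Xc: "\<And>i. i \<in> {1..m} \<Longrightarrow> X i \<subseteq> carrier_vec (n i)"
    using Xconv by (auto simp: convex_vec_set_def)
  have sub: "\<And>i. i \<in> {1..m-1} \<Longrightarrow> i \<in> {1..m}" by auto
  have xX: "\<And>k i. i \<in> {1..m} \<Longrightarrow> x k i \<in> X i"
  proof -
    fix k i assume i: "i \<in> {1..m}"
    show "x k i \<in> X i"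
    proof (cases k)
      case 0 thus ?thesis using x0 i by auto
    next
      case (Suc k')
      show ?thesis
      proof (cases "i = m")
        case True thus ?thesis using xmstep[rule_format, of k'] Suc
          unfolding is_arg_min_def by (elim conjE) simp
      next
        case False hence "i \<in> {1..m-1}" using i by auto
        thus ?thesis using xstep Suc unfolding is_arg_min_def by blast
      qed
    qed
  qed
  have xc: "\<And>k i. i \<in> {1..m} \<Longrightarrow> x k i \<in> carrier_vec (n i)" using xX Xc by blast
  have yc: "\<And>k. y k \<in> carrier_vec l"
  proof -
    fix k show "y k \<in> carrier_vec l"
    proof (induction k)
      case 0 thus ?case using y0 .
    next
      case (Suc k)
      have "A m *\<^sub>v x k m \<in> carrier_vec l" "A m *\<^sub>v x (Suc k) m \<in> carrier_vec l"
        using Ac[OF m1(2)] xc[OF m1(2)] by auto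
      thus ?case unfolding ystep[rule_format] using Suc b by simp
    qed
  qed
  have ydim[simp]: "\<And>k. dim_vec (y k) = l" using yc by (simp add: carrier_vecD)
  have bdim[simp]: "dim_vec b = l" using b by (simp add: carrier_vecD)
  define W where "W = (\<lambda>k j. vsum l (\<lambda>i. A i *\<^sub>v x k i) ({1..m} - {j}) - b - (1 / \<rho>) \<cdot>\<^sub>v y k)"
  define Wm where "Wm = (\<lambda>k. \<gamma> \<cdot>\<^sub>v vsum l (\<lambda>i. A i *\<^sub>v x (Suc k) i) {1..m-1}
                               + (1 - \<gamma>) \<cdot>\<^sub>v (b - A m *\<^sub>v x k m) - b - (1 / \<rho>) \<cdot>\<^sub>v y k)"
  have Wc: "\<And>k j. W k j \<in> carrier_vec l" unfolding W_def using yc b by simp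
  have Wmc: "\<And>k. Wm k \<in> carrier_vec l" unfolding Wm_def using yc b Ac[OF m1(2)] xc[OF m1(2)] by simp
  have foj: "\<And>k j z. j \<in> {1..m-1} \<Longrightarrow> z \<in> X j \<Longrightarrow>
     0 \<le> \<theta> j z - \<theta> j (x (Suc k) j) + 2*(\<rho>/2)*((A j *\<^sub>v (z - x (Suc k) j)) \<bullet> (A j *\<^sub>v x (Suc k) j + W k j))
        + (z - x (Suc k) j) \<bullet> (P j *\<^sub>v (x (Suc k) j - x k j))"
  proof -
    fix k j z assume j: "j \<in> {1..m-1}" and z: "z \<in> X j"
    have j': "j \<in> {1..m}" using j by auto
    have am: "is_arg_min (\<lambda>z. \<theta> j z + \<rho> / 2 * sqn (A j *\<^sub>v z + W k j) + 1 / 2 * wnorm2 (P j) (z - x k j))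
        (\<lambda>z. z \<in> X j) (x (Suc k) j)"
    proof (rule is_arg_min_cong[OF xstep[rule_format, OF j]])
      fix z assume "z \<in> X j"
      hence zc: "z \<in> carrier_vec (n j)" using Xc[OF j'] by auto
      have "A j *\<^sub>v z + vsum l (\<lambda>i. A i *\<^sub>v x k i) ({1..m} - {j}) - b - (1 / \<rho>) \<cdot>\<^sub>v y k = A j *\<^sub>v z + W k j"
        unfolding W_def using Ac[OF j'] zc yc[of k] b by (intro eq_vecI) auto
      thus "\<theta> j z + \<rho> / 2 * sqn (A j *\<^sub>v z + vsum l (\<lambda>i. A i *\<^sub>v x k i) ({1..m} - {j}) - b - (1 / \<rho>) \<cdot>\<^sub>v y k)
             + 1 / 2 * wnorm2 (P j) (z - x k j) =
            \<theta> j z + \<rho> / 2 * sqn (A j *\<^sub>v z + W k j) + 1 / 2 * wnorm2 (P j) (z - x k j)" by simp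
    qed
    show "0 \<le> \<theta> j z - \<theta> j (x (Suc k) j) + 2*(\<rho>/2)*((A j *\<^sub>v (z - x (Suc k) j)) \<bullet> (A j *\<^sub>v x (Suc k) j + W k j))
        + (z - x (Suc k) j) \<bullet> (P j *\<^sub>v (x (Suc k) j - x k j))"
      by (rule fo[OF conv\<theta>[rule_format, OF j'] Xconv[rule_format, OF j'] Ac[OF j'] Pc[OF j'] PT[OF j'] Wc xc[OF j'] am z])
  qed
  have fom: "\<And>k z. z \<in> X m \<Longrightarrow>
     0 \<le> \<theta> m z - \<theta> m (x (Suc k) m) + 2*(\<rho>/2)*((A m *\<^sub>v (z - x (Suc k) m)) \<bullet> (A m *\<^sub>v x (Suc k) m + Wm k))
        + (z - x (Suc k) m) \<bullet> (P m *\<^sub>v (x (Suc k) m - x k m))"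
  proof -
    fix k z assume z: "z \<in> X m"
    note j' = m1(2)
    have am: "is_arg_min (\<lambda>z. \<theta> m z + \<rho> / 2 * sqn (A m *\<^sub>v z + Wm k) + 1 / 2 * wnorm2 (P m) (z - x k m))
        (\<lambda>z. z \<in> X m) (x (Suc k) m)"
    proof (rule is_arg_min_cong[OF xmstep[rule_format]])
      fix z assume "z \<in> X m"
      hence zc: "z \<in> carrier_vec (n m)" using Xc[OF j'] by auto
      have "\<gamma> \<cdot>\<^sub>v vsum l (\<lambda>i. A i *\<^sub>v x (Suc k) i) {1..m-1}
                               + (1 - \<gamma>) \<cdot>\<^sub>v (b - A m *\<^sub>v x k m)
                               + A m *\<^sub>v z - b - (1 / \<rho>) \<cdot>\<^sub>v y k = A m *\<^sub>v z + Wm k"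
        unfolding Wm_def using Ac[OF j'] zc yc[of k] b xc[OF j', of k] by (intro eq_vecI) auto
      thus "\<theta> m z + \<rho> / 2 * sqn (\<gamma> \<cdot>\<^sub>v vsum l (\<lambda>i. A i *\<^sub>v x (Suc k) i) {1..m-1}
                               + (1 - \<gamma>) \<cdot>\<^sub>v (b - A m *\<^sub>v x k m)
                               + A m *\<^sub>v z - b - (1 / \<rho>) \<cdot>\<^sub>v y k)
             + 1 / 2 * wnorm2 (P m) (z - x k m) =
            \<theta> m z + \<rho> / 2 * sqn (A m *\<^sub>v z + Wm k) + 1 / 2 * wnorm2 (P m) (z - x k m)" by simp
    qed
    show "0 \<le> \<theta> m z - \<theta> m (x (Suc k) m) + 2*(\<rho>/2)*((A m *\<^sub>v (z - x (Suc k) m)) \<bullet> (A m *\<^sub>v x (Suc k) m + Wm k))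
        + (z - x (Suc k) m) \<bullet> (P m *\<^sub>v (x (Suc k) m - x k m))"
      by (rule fo[OF conv\<theta>[rule_format, OF j'] Xconv[rule_format, OF j'] Ac[OF j'] Pc[OF j'] PT[OF j'] Wmc xc[OF j'] am z])
  qed
  define ca where "ca = (\<lambda>k i r. (A i *\<^sub>v x k i) $ r)"
  define e where "e = (\<lambda>i. x k i - x (Suc k) i)"
  define dl where "dl = (\<lambda>i. x (Suc k) i - x (Suc (Suc k)) i)"
  define \<alpha> where "\<alpha> = (\<lambda>i. A i *\<^sub>v e i)"
  define \<beta> where "\<beta> = (\<lambda>i. A i *\<^sub>v dl i)"
  define E where "E = vsum l \<alpha> {1..m-1}"
  define D where "D = vsum l \<beta> {1..m-1}"
  define f where "f = y k - y (Suc k)"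
  define g where "g = y (Suc k) - y (Suc (Suc k))"
  have ec: "\<And>i. i \<in> {1..m} \<Longrightarrow> e i \<in> carrier_vec (n i)" unfolding e_def using xc by auto
  have dlc: "\<And>i. i \<in> {1..m} \<Longrightarrow> dl i \<in> carrier_vec (n i)" unfolding dl_def using xc by auto
  have \<alpha>c: "\<And>i. i \<in> {1..m} \<Longrightarrow> \<alpha> i \<in> carrier_vec l" unfolding \<alpha>_def by (metis Ac ec mult_mat_vec_carrier)
  have \<beta>c: "\<And>i. i \<in> {1..m} \<Longrightarrow> \<beta> i \<in> carrier_vec l" unfolding \<beta>_def by (metis Ac dlc mult_mat_vec_carrier)
  have Ec: "E \<in> carrier_vec l" "D \<in> carrier_vec l" unfolding E_def D_def by auto
  have fc: "f \<in> carrier_vec l" "g \<in> carrier_vec l" unfolding f_def g_def using yc by auto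
  have Edim[simp]: "dim_vec E = l" "dim_vec D = l" "dim_vec f = l" "dim_vec g = l"
    using Ec fc by (auto simp: carrier_vecD)
  have \<alpha>r: "\<And>i r. i \<in> {1..m} \<Longrightarrow> r < l \<Longrightarrow> \<alpha> i $ r = ca k i r - ca (Suc k) i r"
  proof -
    fix i r assume i: "i \<in> {1..m}" "r < l"
    have "\<alpha> i = A i *\<^sub>v x k i - A i *\<^sub>v x (Suc k) i"
      unfolding \<alpha>_def e_def by (rule mult_minus_distrib_mat_vec[OF Ac[OF i(1)] xc[OF i(1)] xc[OF i(1)]])
    thus "\<alpha> i $ r = ca k i r - ca (Suc k) i r" unfolding ca_def using i Ac[OF i(1)] by simp
  qed
  have \<beta>r: "\<And>i r. i \<in> {1..m} \<Longrightarrow> r < l \<Longrightarrow> \<beta> i $ r = ca (Suc k) i r - ca (Suc (Suc k)) i r"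
  proof -
    fix i r assume i: "i \<in> {1..m}" "r < l"
    have "\<beta> i = A i *\<^sub>v x (Suc k) i - A i *\<^sub>v x (Suc (Suc k)) i"
      unfolding \<beta>_def dl_def by (rule mult_minus_distrib_mat_vec[OF Ac[OF i(1)] xc[OF i(1)] xc[OF i(1)]])
    thus "\<beta> i $ r = ca (Suc k) i r - ca (Suc (Suc k)) i r" unfolding ca_def using i Ac[OF i(1)] by simp
  qed
  have Er: "\<And>r. r < l \<Longrightarrow> E $ r = (\<Sum>i\<in>{1..m-1}. ca k i r) - (\<Sum>i\<in>{1..m-1}. ca (Suc k) i r)"
    unfolding E_def using \<alpha>r sub by (simp add: sum_subtractf[symmetric])
  have Dr: "\<And>r. r < l \<Longrightarrow> D $ r = (\<Sum>i\<in>{1..m-1}. ca (Suc k) i r) - (\<Sum>i\<in>{1..m-1}. ca (Suc (Suc k)) i r)"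
    unfolding D_def using \<beta>r sub by (simp add: sum_subtractf[symmetric])
  have blk: "\<And>j. j \<in> {1..m-1} \<Longrightarrow> 0 \<le> \<rho>*(\<beta> j \<bullet> ((1/\<rho>) \<cdot>\<^sub>v f - \<beta> j - E - \<alpha> m + \<alpha> j))
        + dl j \<bullet> (P j *\<^sub>v e j) - dl j \<bullet> (P j *\<^sub>v dl j)"
  proof -
    fix j assume j: "j \<in> {1..m-1}"
    have j': "j \<in> {1..m}" using j by auto
    define U0 where "U0 = A j *\<^sub>v x (Suc k) j + W k j"
    define U1 where "U1 = A j *\<^sub>v x (Suc (Suc k)) j + W (Suc k) j"
    have Uc: "U0 \<in> carrier_vec l" "U1 \<in> carrier_vec l" unfolding U0_def U1_def using Ac[OF j'] xc[OF j'] Wc by auto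
    have pr: "0 \<le> \<rho>*((A j *\<^sub>v (x (Suc k) j - x (Suc (Suc k)) j)) \<bullet> (U1 - U0))
         + (x (Suc k) j - x (Suc (Suc k)) j) \<bullet> (P j *\<^sub>v (x k j - x (Suc k) j))
             - (x (Suc k) j - x (Suc (Suc k)) j) \<bullet> (P j *\<^sub>v (x (Suc k) j - x (Suc (Suc k)) j))"
      by (rule pair[OF Ac[OF j'] Pc[OF j'] PT[OF j'] xc[OF j'] xc[OF j'] xc[OF j'] Uc
            foj[where k=k and j=j and z="x (Suc (Suc k)) j", OF j xX[OF j'], folded U0_def]
            foj[where k="Suc k" and j=j and z="x (Suc k) j", OF j xX[OF j'], folded U1_def]])
    have Ud: "U1 - U0 = (1/\<rho>) \<cdot>\<^sub>v f - \<beta> j - E - \<alpha> m + \<alpha> j"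
    proof (rule eq_vecI)
      show "dim_vec (U1 - U0) = dim_vec ((1/\<rho>) \<cdot>\<^sub>v f - \<beta> j - E - \<alpha> m + \<alpha> j)"
        using Uc fc \<alpha>c[OF j'] by simp
    next
      fix r assume "r < dim_vec ((1/\<rho>) \<cdot>\<^sub>v f - \<beta> j - E - \<alpha> m + \<alpha> j)"
      hence r: "r < l" using \<alpha>c[OF j'] by simp
      have "(U1 - U0) $ r = ca (Suc (Suc k)) j r + ((\<Sum>i\<in>{1..m}-{j}. ca (Suc k) i r) - b $ r - (1/\<rho>) * y (Suc k) $ r)
           - (ca (Suc k) j r + ((\<Sum>i\<in>{1..m}-{j}. ca k i r) - b $ r - (1/\<rho>) * y k $ r))"
      proof -
        have "(U1 - U0) $ r = U1 $ r - U0 $ r" using r Uc by simp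
        moreover have "U1 $ r = ca (Suc (Suc k)) j r + ((\<Sum>i\<in>{1..m}-{j}. ca (Suc k) i r) - b $ r - (1/\<rho>) * y (Suc k) $ r)"
          unfolding U1_def W_def ca_def using r Ac[OF j'] yc b by simp
        moreover have "U0 $ r = ca (Suc k) j r + ((\<Sum>i\<in>{1..m}-{j}. ca k i r) - b $ r - (1/\<rho>) * y k $ r)"
          unfolding U0_def W_def ca_def using r Ac[OF j'] yc b by simp
        ultimately show ?thesis by simp
      qed
      also have "\<dots> = (1/\<rho>) * (y k $ r - y (Suc k) $ r) - \<beta> j $ r - E $ r - \<alpha> m $ r + \<alpha> j $ r"
        using \<alpha>r[OF j' r] \<beta>r[OF j' r] \<alpha>r[OF m1(2) r] Er[OF r]
        unfolding sum_split[OF j m2] by (simp add: algebra_simps)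
      also have "\<dots> = ((1/\<rho>) \<cdot>\<^sub>v f - \<beta> j - E - \<alpha> m + \<alpha> j) $ r"
        using r carrier_vecD[OF \<alpha>c[OF j']] carrier_vecD[OF \<alpha>c[OF m1(2)]] carrier_vecD[OF \<beta>c[OF j']]
          carrier_vecD[OF Ec(1)] unfolding f_def by simp
      finally show "(U1 - U0) $ r = ((1/\<rho>) \<cdot>\<^sub>v f - \<beta> j - E - \<alpha> m + \<alpha> j) $ r" .
    qed
    show "0 \<le> \<rho>*(\<beta> j \<bullet> ((1/\<rho>) \<cdot>\<^sub>v f - \<beta> j - E - \<alpha> m + \<alpha> j))
        + dl j \<bullet> (P j *\<^sub>v e j) - dl j \<bullet> (P j *\<^sub>v dl j)"
      using pr unfolding Ud \<beta>_def dl_def e_def .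
  qed
  have yr: "\<And>k r. r < l \<Longrightarrow> y (Suc k) $ r = y k $ r - \<rho> * (\<gamma> * (\<Sum>i\<in>{1..m-1}. ca (Suc k) i r)
          + (1 - \<gamma>) * (b $ r - ca k m r) + ca (Suc k) m r - b $ r)"
    unfolding ystep[rule_format] ca_def using Ac[OF m1(2)] by simp
  have Wmr: "\<And>k r. r < l \<Longrightarrow> (A m *\<^sub>v x (Suc k) m + Wm k) $ r = - (1/\<rho>) * y (Suc k) $ r"
  proof -
    fix k r assume r: "r < l"
    have "(A m *\<^sub>v x (Suc k) m + Wm k) $ r = ca (Suc k) m r + (\<gamma> * (\<Sum>i\<in>{1..m-1}. ca (Suc k) i r)
          + (1 - \<gamma>) * (b $ r - ca k m r) - b $ r - (1/\<rho>) * y k $ r)"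
      unfolding Wm_def ca_def using r Ac[OF m1(2)] by simp
    also have "\<dots> = - (1/\<rho>) * y (Suc k) $ r" unfolding yr[OF r] using rho by (simp add: field_simps)
    finally show "(A m *\<^sub>v x (Suc k) m + Wm k) $ r = - (1/\<rho>) * y (Suc k) $ r" .
  qed
  have blkm: "0 \<le> \<beta> m \<bullet> g + dl m \<bullet> (P m *\<^sub>v e m) - dl m \<bullet> (P m *\<^sub>v dl m)"
  proof -
    note j' = m1(2)
    define U0 where "U0 = A m *\<^sub>v x (Suc k) m + Wm k"
    define U1 where "U1 = A m *\<^sub>v x (Suc (Suc k)) m + Wm (Suc k)"
    have Uc: "U0 \<in> carrier_vec l" "U1 \<in> carrier_vec l" unfolding U0_def U1_def using Ac[OF j'] xc[OF j'] Wmc by auto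
    have pr: "0 \<le> \<rho>*((A m *\<^sub>v (x (Suc k) m - x (Suc (Suc k)) m)) \<bullet> (U1 - U0))
         + (x (Suc k) m - x (Suc (Suc k)) m) \<bullet> (P m *\<^sub>v (x k m - x (Suc k) m))
             - (x (Suc k) m - x (Suc (Suc k)) m) \<bullet> (P m *\<^sub>v (x (Suc k) m - x (Suc (Suc k)) m))"
      by (rule pair[OF Ac[OF j'] Pc[OF j'] PT[OF j'] xc[OF j'] xc[OF j'] xc[OF j'] Uc
            fom[where k=k and z="x (Suc (Suc k)) m", OF xX[OF j'], folded U0_def]
            fom[where k="Suc k" and z="x (Suc k) m", OF xX[OF j'], folded U1_def]])
    have Ud: "U1 - U0 = (1/\<rho>) \<cdot>\<^sub>v g"
    proof (rule eq_vecI)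
      show "dim_vec (U1 - U0) = dim_vec ((1/\<rho>) \<cdot>\<^sub>v g)" using Uc fc by simp
    next
      fix r assume "r < dim_vec ((1/\<rho>) \<cdot>\<^sub>v g)"
      hence r: "r < l" using fc by simp
      have "(U1 - U0) $ r = U1 $ r - U0 $ r" using r Uc by simp
      also have "\<dots> = - (1/\<rho>) * y (Suc (Suc k)) $ r - (- (1/\<rho>) * y (Suc k) $ r)"
        unfolding U0_def U1_def Wmr[OF r] ..
      also have "\<dots> = ((1/\<rho>) \<cdot>\<^sub>v g) $ r" unfolding g_def using r by (simp add: algebra_simps)
      finally show "(U1 - U0) $ r = ((1/\<rho>) \<cdot>\<^sub>v g) $ r" .
    qed
    have "\<rho>*(\<beta> m \<bullet> ((1/\<rho>) \<cdot>\<^sub>v g)) = \<beta> m \<bullet> g" using rho \<beta>c[OF j'] fc by simp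
    thus ?thesis using pr unfolding Ud \<beta>_def dl_def e_def by simp
  qed
  have gf: "g = f + \<rho> \<cdot>\<^sub>v ((1 - \<gamma>) \<cdot>\<^sub>v \<alpha> m - \<beta> m - \<gamma> \<cdot>\<^sub>v D)"
  proof (rule eq_vecI)
    show "dim_vec g = dim_vec (f + \<rho> \<cdot>\<^sub>v ((1 - \<gamma>) \<cdot>\<^sub>v \<alpha> m - \<beta> m - \<gamma> \<cdot>\<^sub>v D))"
      using fc by simp
  next
    fix r assume "r < dim_vec (f + \<rho> \<cdot>\<^sub>v ((1 - \<gamma>) \<cdot>\<^sub>v \<alpha> m - \<beta> m - \<gamma> \<cdot>\<^sub>v D))"
    hence r: "r < l" using fc by simp
    have "(f + \<rho> \<cdot>\<^sub>v ((1 - \<gamma>) \<cdot>\<^sub>v \<alpha> m - \<beta> m - \<gamma> \<cdot>\<^sub>v D)) $ r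
        = f $ r + \<rho> * ((1 - \<gamma>) * \<alpha> m $ r - \<beta> m $ r - \<gamma> * D $ r)"
      using r carrier_vecD[OF \<alpha>c[OF m1(2)]] carrier_vecD[OF \<beta>c[OF m1(2)]] carrier_vecD[OF Ec(2)] carrier_vecD[OF fc(1)]
      by simp
    also have "\<dots> = g $ r"
      unfolding f_def g_def using r
      by (simp only: \<alpha>r[OF m1(2) r] \<beta>r[OF m1(2) r] Dr[OF r] yr[OF r] index_minus_vec ydim) (simp add: algebra_simps)
    finally show "g $ r = (f + \<rho> \<cdot>\<^sub>v ((1 - \<gamma>) \<cdot>\<^sub>v \<alpha> m - \<beta> m - \<gamma> \<cdot>\<^sub>v D)) $ r" by simp
  qed
  note ds = add_scalar_prod_distrib[of _ l] scalar_prod_add_distrib[of _ l] minus_scalar_prod_distrib[of _ l]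
    scalar_prod_minus_distrib[of _ l] smult_scalar_prod_distrib[of _ l] scalar_prod_smult_distrib[of _ l]
  have am: "\<alpha> m \<in> carrier_vec l" "\<beta> m \<in> carrier_vec l" using \<alpha>c \<beta>c m1 by auto
  define J where "J = {1..m-1}"
  have Jf: "finite J" unfolding J_def by simp
  have JJ: "\<And>i. i \<in> J \<Longrightarrow> i \<in> {1..m}" unfolding J_def by auto
  define SPe where "SPe = (\<Sum>i\<in>J. wnorm2 (P i) (e i))"
  define SPd where "SPd = (\<Sum>i\<in>J. wnorm2 (P i) (dl i))"
  define SdPe where "SdPe = (\<Sum>i\<in>J. dl i \<bullet> (P i *\<^sub>v e i))"
  define Saa where "Saa = (\<Sum>i\<in>J. \<alpha> i \<bullet> \<alpha> i)"
  define Sbb where "Sbb = (\<Sum>i\<in>J. \<beta> i \<bullet> \<beta> i)"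
  define Sba where "Sba = (\<Sum>i\<in>J. \<beta> i \<bullet> \<alpha> i)"
  have blk2: "\<And>j. j \<in> J \<Longrightarrow> 0 \<le> \<beta> j \<bullet> f - \<rho>*(\<beta> j \<bullet> \<beta> j) - \<rho>*(\<beta> j \<bullet> E) - \<rho>*(\<beta> j \<bullet> \<alpha> m)
        + \<rho>*(\<beta> j \<bullet> \<alpha> j) + dl j \<bullet> (P j *\<^sub>v e j) - wnorm2 (P j) (dl j)"
  proof -
    fix j assume j: "j \<in> J"
    have jc: "\<alpha> j \<in> carrier_vec l" "\<beta> j \<in> carrier_vec l" using \<alpha>c \<beta>c JJ[OF j] by auto
    have "\<rho>*(\<beta> j \<bullet> ((1/\<rho>) \<cdot>\<^sub>v f - \<beta> j - E - \<alpha> m + \<alpha> j)) = \<beta> j \<bullet> f - \<rho>*(\<beta> j \<bullet> \<beta> j)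
        - \<rho>*(\<beta> j \<bullet> E) - \<rho>*(\<beta> j \<bullet> \<alpha> m) + \<rho>*(\<beta> j \<bullet> \<alpha> j)"
      using jc am Ec fc rho by (simp add: ds algebra_simps)
    thus "0 \<le> \<beta> j \<bullet> f - \<rho>*(\<beta> j \<bullet> \<beta> j) - \<rho>*(\<beta> j \<bullet> E) - \<rho>*(\<beta> j \<bullet> \<alpha> m)
        + \<rho>*(\<beta> j \<bullet> \<alpha> j) + dl j \<bullet> (P j *\<^sub>v e j) - wnorm2 (P j) (dl j)"
      using blk[of j] j unfolding J_def wnorm2_def by simp
  qed
  have I1: "0 \<le> D \<bullet> f - \<rho>*Sbb - \<rho>*(E \<bullet> D) - \<rho>*(D \<bullet> \<alpha> m) + \<rho>*Sba + SdPe - SPd"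
  proof -
    have "0 \<le> (\<Sum>j\<in>J. \<beta> j \<bullet> f - \<rho>*(\<beta> j \<bullet> \<beta> j) - \<rho>*(\<beta> j \<bullet> E) - \<rho>*(\<beta> j \<bullet> \<alpha> m)
        + \<rho>*(\<beta> j \<bullet> \<alpha> j) + dl j \<bullet> (P j *\<^sub>v e j) - wnorm2 (P j) (dl j))"
      using blk2 by (rule sum_nonneg)
    also have "\<dots> = (\<Sum>j\<in>J. \<beta> j \<bullet> f) - \<rho>*Sbb - \<rho>*(\<Sum>j\<in>J. \<beta> j \<bullet> E) - \<rho>*(\<Sum>j\<in>J. \<beta> j \<bullet> \<alpha> m)
        + \<rho>*Sba + SdPe - SPd"
      unfolding Sbb_def Sba_def SdPe_def SPd_def
      by (simp add: sum.distrib sum_subtractf sum_distrib_left)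
    also have "\<dots> = D \<bullet> f - \<rho>*Sbb - \<rho>*(E \<bullet> D) - \<rho>*(D \<bullet> \<alpha> m) + \<rho>*Sba + SdPe - SPd"
    proof -
      have "\<And>v. v \<in> carrier_vec l \<Longrightarrow> (\<Sum>j\<in>J. \<beta> j \<bullet> v) = D \<bullet> v"
        unfolding D_def J_def using vsum_dot[of "{1..m-1}" \<beta> l] \<beta>c sub by auto
      moreover have "D \<bullet> E = E \<bullet> D" by (rule comm_scalar_prod[OF Ec(2) Ec(1)])
      ultimately show ?thesis using fc Ec am by simp
    qed
    finally show ?thesis .
  qed
  have G1nn: "\<And>d :: nat \<Rightarrow> real vec. (\<And>i. i \<in> J \<Longrightarrow> d i \<in> carrier_vec (n i)) \<Longrightarrow> 0 \<le> G1_qf m \<rho> A P d"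
  proof -
    fix d :: "nat \<Rightarrow> real vec" assume dc: "\<And>i. i \<in> J \<Longrightarrow> d i \<in> carrier_vec (n i)"
    show "0 \<le> G1_qf m \<rho> A P d"
    proof (cases "\<exists>i\<in>{1..m-1}. d i \<noteq> 0\<^sub>v (n i)")
      case True
      have "0 < G1_qf m \<rho> A P d"
        by (rule G1pd[rule_format]) (use True dc in \<open>auto simp: J_def\<close>)
      thus ?thesis by simp
    next
      case False
      hence d0: "\<And>i. i \<in> J \<Longrightarrow> d i = 0\<^sub>v (n i)" unfolding J_def by auto
      have z1: "\<And>i. i \<in> J \<Longrightarrow> wnorm2 (P i) (d i) = 0"
      proof -
        fix i assume i: "i \<in> J"
        have "P i *\<^sub>v d i \<in> carrier_vec (n i)" using Pc[OF JJ[OF i]] dc[OF i] by simp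
        thus "wnorm2 (P i) (d i) = 0" unfolding wnorm2_def d0[OF i] by simp
      qed
      have z2: "\<And>i. i \<in> J \<Longrightarrow> A i *\<^sub>v d i = 0\<^sub>v l"
      proof -
        fix i assume i: "i \<in> J"
        show "A i *\<^sub>v d i = 0\<^sub>v l" using mat_vec_zero[OF Ac[OF JJ[OF i]]] d0[OF i] by simp
      qed
      have "G1_qf m \<rho> A P d = 0"
        unfolding G1_qf_def J_def[symmetric] using z1 z2 Ac JJ
        by (simp add: J_def)
      thus ?thesis by simp
    qed
  qed
  have cm: "\<alpha> m \<bullet> \<beta> m = \<beta> m \<bullet> \<alpha> m" "\<alpha> m \<bullet> D = D \<bullet> \<alpha> m" "\<beta> m \<bullet> D = D \<bullet> \<beta> m" "D \<bullet> E = E \<bullet> D"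
    "f \<bullet> \<alpha> m = \<alpha> m \<bullet> f" "f \<bullet> \<beta> m = \<beta> m \<bullet> f" "f \<bullet> D = D \<bullet> f"
    by (rule comm_scalar_prod[OF am(1) am(2)] comm_scalar_prod[OF am(1) Ec(2)] comm_scalar_prod[OF am(2) Ec(2)]
       comm_scalar_prod[OF Ec(2) Ec(1)] comm_scalar_prod[OF fc(1) am(1)] comm_scalar_prod[OF fc(1) am(2)]
       comm_scalar_prod[OF fc(1) Ec(2)])+
  have G1d: "G1_qf m \<rho> A P dl = SPd - \<rho>*(D \<bullet> D - Sbb)"
  proof -
    have "G1_qf m \<rho> A P dl = SPd - \<rho>*(\<Sum>i\<in>J. \<Sum>j\<in>J-{i}. \<beta> i \<bullet> \<beta> j)"
      unfolding G1_qf_def SPd_def J_def \<beta>_def by simp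
    also have "(\<Sum>i\<in>J. \<Sum>j\<in>J-{i}. \<beta> i \<bullet> \<beta> j) = D \<bullet> D - Sbb"
      unfolding D_def Sbb_def J_def by (rule double_sum) (use \<beta>c sub in auto)
    finally show ?thesis .
  qed
  have G1e: "G1_qf m \<rho> A P e = SPe - \<rho>*(E \<bullet> E - Saa)"
  proof -
    have "G1_qf m \<rho> A P e = SPe - \<rho>*(\<Sum>i\<in>J. \<Sum>j\<in>J-{i}. \<alpha> i \<bullet> \<alpha> j)"
      unfolding G1_qf_def SPe_def J_def \<alpha>_def by simp
    also have "(\<Sum>i\<in>J. \<Sum>j\<in>J-{i}. \<alpha> i \<bullet> \<alpha> j) = E \<bullet> E - Saa"
      unfolding E_def Saa_def J_def by (rule double_sum) (use \<alpha>c sub in auto)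
    finally show ?thesis .
  qed
  define cv where "cv = (\<lambda>i. \<alpha> i - \<beta> i)"
  have cvc: "\<And>i. i \<in> J \<Longrightarrow> cv i \<in> carrier_vec l"
  proof -
    fix i assume i: "i \<in> J"
    show "cv i \<in> carrier_vec l" unfolding cv_def using \<alpha>c[OF JJ[OF i]] \<beta>c[OF JJ[OF i]] by simp
  qed
  have Acv: "\<And>i. i \<in> J \<Longrightarrow> A i *\<^sub>v (e i - dl i) = cv i"
  proof -
    fix i assume i: "i \<in> J"
    show "A i *\<^sub>v (e i - dl i) = cv i"
      unfolding cv_def \<alpha>_def \<beta>_def by (rule mult_minus_distrib_mat_vec[OF Ac[OF JJ[OF i]] ec[OF JJ[OF i]] dlc[OF JJ[OF i]]])
  qed
  have N1: "0 \<le> (SPe - 2*SdPe + SPd) - \<rho>*((E \<bullet> E - 2*(E \<bullet> D) + D \<bullet> D) - (Saa - 2*Sba + Sbb))"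
  proof -
    have "0 \<le> G1_qf m \<rho> A P (\<lambda>i. e i - dl i)" using G1nn ec dlc JJ by simp
    also have "G1_qf m \<rho> A P (\<lambda>i. e i - dl i) = (\<Sum>i\<in>J. wnorm2 (P i) (e i - dl i))
        - \<rho>*(\<Sum>i\<in>J. \<Sum>j\<in>J-{i}. cv i \<bullet> cv j)"
    proof -
      have "(\<Sum>i\<in>J. \<Sum>j\<in>J-{i}. (A i *\<^sub>v (e i - dl i)) \<bullet> (A j *\<^sub>v (e j - dl j)))
          = (\<Sum>i\<in>J. \<Sum>j\<in>J-{i}. cv i \<bullet> cv j)"
        by (intro sum.cong refl) (simp add: Acv)
      thus ?thesis unfolding G1_qf_def J_def by simp
    qed
    also have "(\<Sum>i\<in>J. \<Sum>j\<in>J-{i}. cv i \<bullet> cv j) = vsum l cv J \<bullet> vsum l cv J - (\<Sum>i\<in>J. cv i \<bullet> cv i)"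
      by (rule double_sum[OF Jf cvc])
    also have "vsum l cv J = E - D"
    proof (rule eq_vecI)
      fix r assume "r < dim_vec (E - D)"
      hence r: "r < l" by simp
      have "(\<Sum>i\<in>J. cv i $ r) = (\<Sum>i\<in>J. \<alpha> i $ r - \<beta> i $ r)"
      proof (rule sum.cong[OF refl])
        fix i assume i: "i \<in> J"
        show "cv i $ r = \<alpha> i $ r - \<beta> i $ r" unfolding cv_def using r \<beta>c[OF JJ[OF i]] by simp
      qed
      thus "vsum l cv J $ r = (E - D) $ r"
        using r unfolding E_def D_def J_def by (simp add: sum_subtractf)
    qed simp
    also have "(E - D) \<bullet> (E - D) = E \<bullet> E - 2*(E \<bullet> D) + D \<bullet> D"
      using Ec cm by (simp add: ds)
    also have "(\<Sum>i\<in>J. cv i \<bullet> cv i) = Saa - 2*Sba + Sbb"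
    proof -
      have "\<And>i. i \<in> J \<Longrightarrow> cv i \<bullet> cv i = \<alpha> i \<bullet> \<alpha> i - 2*(\<beta> i \<bullet> \<alpha> i) + \<beta> i \<bullet> \<beta> i"
      proof -
        fix i assume i: "i \<in> J"
        have c: "\<alpha> i \<in> carrier_vec l" "\<beta> i \<in> carrier_vec l" using \<alpha>c \<beta>c JJ[OF i] by auto
        have "\<alpha> i \<bullet> \<beta> i = \<beta> i \<bullet> \<alpha> i" using c by (rule comm_scalar_prod)
        thus "cv i \<bullet> cv i = \<alpha> i \<bullet> \<alpha> i - 2*(\<beta> i \<bullet> \<alpha> i) + \<beta> i \<bullet> \<beta> i"
          unfolding cv_def using c by (simp add: ds)
      qed
      hence "(\<Sum>i\<in>J. cv i \<bullet> cv i) = (\<Sum>i\<in>J. \<alpha> i \<bullet> \<alpha> i - 2*(\<beta> i \<bullet> \<alpha> i) + \<beta> i \<bullet> \<beta> i)"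
        by (rule sum.cong[OF refl])
      thus ?thesis unfolding Saa_def Sba_def Sbb_def by (simp add: sum.distrib sum_subtractf sum_distrib_left)
    qed
    also have "(\<Sum>i\<in>J. wnorm2 (P i) (e i - dl i)) = SPe - 2*SdPe + SPd"
    proof -
      have "\<And>i. i \<in> J \<Longrightarrow> wnorm2 (P i) (e i - dl i) = wnorm2 (P i) (e i) - 2*(dl i \<bullet> (P i *\<^sub>v e i)) + wnorm2 (P i) (dl i)"
      proof -
        fix i assume i: "i \<in> J"
        have "e i - dl i = e i + (-1) \<cdot>\<^sub>v dl i" using ec dlc JJ[OF i] by (intro eq_vecI) auto
        thus "wnorm2 (P i) (e i - dl i) = wnorm2 (P i) (e i) - 2*(dl i \<bullet> (P i *\<^sub>v e i)) + wnorm2 (P i) (dl i)"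
          using wnorm2_add_smult[OF Pc[OF JJ[OF i]] PT[OF JJ[OF i]] ec[OF JJ[OF i]] dlc[OF JJ[OF i]], of "-1"] by simp
      qed
      hence "(\<Sum>i\<in>J. wnorm2 (P i) (e i - dl i)) = (\<Sum>i\<in>J. wnorm2 (P i) (e i) - 2*(dl i \<bullet> (P i *\<^sub>v e i)) + wnorm2 (P i) (dl i))"
        by (rule sum.cong[OF refl])
      thus ?thesis unfolding SPe_def SdPe_def SPd_def by (simp add: sum.distrib sum_subtractf sum_distrib_left)
    qed
    finally show ?thesis .
  qed
  have N2: "0 \<le> wnorm2 (P m) (e m) - 2*(dl m \<bullet> (P m *\<^sub>v e m)) + wnorm2 (P m) (dl m)"
  proof -
    note mm = m1(2)
    have eq: "e m - dl m = e m + (-1) \<cdot>\<^sub>v dl m" using ec[OF mm] dlc[OF mm] by (intro eq_vecI) auto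
    have "wnorm2 (P m) (e m - dl m) = wnorm2 (P m) (e m) - 2*(dl m \<bullet> (P m *\<^sub>v e m)) + wnorm2 (P m) (dl m)"
      unfolding eq using wnorm2_add_smult[OF Pc[OF mm] PT[OF mm] ec[OF mm] dlc[OF mm], of "-1"] by simp
    moreover have "0 \<le> wnorm2 (P m) (e m - dl m)"
    proof (cases "e m - dl m = 0\<^sub>v (n m)")
      case True
      have "P m *\<^sub>v (e m - dl m) \<in> carrier_vec (n m)" using Pc[OF mm] ec[OF mm] dlc[OF mm] by simp
      thus ?thesis unfolding wnorm2_def True by simp
    next
      case False
      have "0 < (e m - dl m) \<bullet> (P m *\<^sub>v (e m - dl m))"
        using Ppd mm False ec[OF mm] dlc[OF mm] unfolding sym_pd_def by simp
      thus ?thesis unfolding wnorm2_def by simp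
    qed
    ultimately show ?thesis by simp
  qed
  have N3: "0 \<le> D \<bullet> D + 2*(D \<bullet> \<alpha> m) + \<alpha> m \<bullet> \<alpha> m"
    using sqn_nonneg[of "D + 1 \<cdot>\<^sub>v \<alpha> m"] sqn_add_smult[OF Ec(2) am(1), of 1] cm unfolding sqn_def by simp
  have bmg: "\<beta> m \<bullet> g = \<beta> m \<bullet> f + \<rho>*((1-\<gamma>)*(\<beta> m \<bullet> \<alpha> m) - \<beta> m \<bullet> \<beta> m - \<gamma>*(D \<bullet> \<beta> m))"
    unfolding gf using am Ec fc cm by (simp add: ds algebra_simps)
  have gg: "sqn g = sqn f + 2*\<rho>*((1-\<gamma>)*(\<alpha> m \<bullet> f) - \<beta> m \<bullet> f - \<gamma>*(D \<bullet> f))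
      + \<rho>^2*((1-\<gamma>)^2*(\<alpha> m \<bullet> \<alpha> m) + \<beta> m \<bullet> \<beta> m + \<gamma>^2*(D \<bullet> D)
               - 2*(1-\<gamma>)*(\<beta> m \<bullet> \<alpha> m) - 2*(1-\<gamma>)*\<gamma>*(D \<bullet> \<alpha> m) + 2*\<gamma>*(D \<bullet> \<beta> m))"
  proof -
    define Wv where "Wv = (1 - \<gamma>) \<cdot>\<^sub>v \<alpha> m - \<beta> m - \<gamma> \<cdot>\<^sub>v D"
    have Wc: "Wv \<in> carrier_vec l" unfolding Wv_def using am Ec by simp
    have "sqn g = sqn f + 2*\<rho>*(Wv \<bullet> f) + \<rho>^2 * sqn Wv"
      unfolding gf Wv_def[symmetric] by (rule sqn_add_smult[OF fc(1) Wc])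
    moreover have "Wv \<bullet> f = (1-\<gamma>)*(\<alpha> m \<bullet> f) - \<beta> m \<bullet> f - \<gamma>*(D \<bullet> f)"
      unfolding Wv_def using am Ec fc by (simp add: ds)
    moreover have "sqn Wv = (1-\<gamma>)^2*(\<alpha> m \<bullet> \<alpha> m) + \<beta> m \<bullet> \<beta> m + \<gamma>^2*(D \<bullet> D)
               - 2*(1-\<gamma>)*(\<beta> m \<bullet> \<alpha> m) - 2*(1-\<gamma>)*\<gamma>*(D \<bullet> \<alpha> m) + 2*\<gamma>*(D \<bullet> \<beta> m)"
      unfolding Wv_def sqn_def using am Ec cm by (simp add: ds algebra_simps power2_eq_square)
    ultimately show ?thesis by simp
  qed
  have I2: "0 \<le> \<beta> m \<bullet> g + dl m \<bullet> (P m *\<^sub>v e m) - wnorm2 (P m) (dl m)"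
    using blkm unfolding wnorm2_def .
  have fin: "(SPd - \<rho>*(D \<bullet> D - Sbb)) + wnorm2 (P m) (dl m) + \<rho>/\<gamma>*(\<beta> m \<bullet> \<beta> m) + 2*((1-\<gamma>)/\<gamma>)*(\<beta> m \<bullet> g)
        + 1/(\<gamma>*\<rho>)*sqn g
       \<le> (SPe - \<rho>*(E \<bullet> E - Saa)) + wnorm2 (P m) (e m) + \<rho>/\<gamma>*(\<alpha> m \<bullet> \<alpha> m) + 2*((1-\<gamma>)/\<gamma>)*(\<alpha> m \<bullet> f)
        + 1/(\<gamma>*\<rho>)*sqn f"
    by (rule final_alg[OF rho gam I1 I2 bmg gg N1 N2 N3])
  have e1: "(\<lambda>i. x (k+1) i - x (k+2) i) = dl" unfolding dl_def by simp
  have e2: "(\<lambda>i. x k i - x (k+1) i) = e" unfolding e_def by simp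
  have e3: "y (k+1) - y (k+2) = g" "y k - y (k+1) = f" unfolding g_def f_def by simp_all
  have h1: "H_qf m \<rho> \<gamma> A P dl g = (SPd - \<rho>*(D \<bullet> D - Sbb)) + wnorm2 (P m) (dl m) + \<rho>/\<gamma>*(\<beta> m \<bullet> \<beta> m)
        + 2*((1-\<gamma>)/\<gamma>)*(\<beta> m \<bullet> g) + 1/(\<gamma>*\<rho>)*sqn g"
    unfolding H_qf_def G1d by (simp add: \<beta>_def sqn_def)
  have h2: "H_qf m \<rho> \<gamma> A P e f = (SPe - \<rho>*(E \<bullet> E - Saa)) + wnorm2 (P m) (e m) + \<rho>/\<gamma>*(\<alpha> m \<bullet> \<alpha> m)
        + 2*((1-\<gamma>)/\<gamma>)*(\<alpha> m \<bullet> f) + 1/(\<gamma>*\<rho>)*sqn f"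
    unfolding H_qf_def G1e by (simp add: \<alpha>_def sqn_def)
  show "H_qf m \<rho> \<gamma> A P (\<lambda>i. x (k+1) i - x (k+2) i) (y (k+1) - y (k+2))
            \<le> H_qf m \<rho> \<gamma> A P (\<lambda>i. x k i - x (k+1) i) (y k - y (k+1))"
    unfolding e1 e2 e3 h1 h2 by (rule fin)
qed

end
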